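(* Let $k$ be a field, $n\ge3$, $A=k[X_1,\dots,X_{n-1}]$ with $\deg X_i=1$, $\mathfrak m=(X_1,\dots,X_{n-1})$, $d\ge1$, $f_1,\dots,f_n\in A_d$ nonzero, $I=(f_1,\dots,f_n)$, and $h:k[T_1,\dots,T_n]\to A$, $T_i\mapsto f_i$. Suppose $I$ is of linear type outside $V(\mathfrak m)$, and let $\eta$ be an integer such that $H^0_{\mathfrak m}(\mathrm{Sym}_A(I))_\nu=0$ for all $\nu\ge\eta$. Then $\mathrm{ann}_{k[T_1,\dots,T_n]}(\mathrm{Sym}_A(I)_\nu)=\ker(h)$ for all $\nu\ge\eta$.
   Context: $\mathrm{Sym}_A(I)=A[T_1,\dots,T_n]/\ker\alpha$, where $\alpha(T_i)=f_i$ and $\ker\alpha$ is generated by the $\sum b_iT_i$ with $b_i\in A$, $\sum b_if_i=0$; it is bigraded, and $\mathrm{Sym}_A(I)_\nu$ denotes its component of degree $\nu$ with respect to the grading of $A$ (the image of $A_\nu[T_1,\dots,T_n]$), a $k[T_1,\dots,T_n]$-module. $H^0_{\mathfrak m}(N)$ is the submodule of elements annihilated by a power of $\mathfrak m$. $I$ is of linear type outside $V(\mathfrak m)$ if for every prime $\mathfrak p\not\supseteq\mathfrak m$, $\mathrm{Sym}_{A_{\mathfrak p}}(I_{\mathfrak p})\to\mathrm{Rees}_{A_{\mathfrak p}}(I_{\mathfrak p})$ is an isomorphism. *)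

theory Defs
  imports Main "HOL-Library.Poly_Mapping"
begin

text \<open>Polynomials over a field 'k in the variables of type nat + nat:
  Inl i stands for X_(i+1) (i < n-1), Inr j stands for T_(j+1) (j < n).
  All rings of the statement (A, k[T], A[T]) are subrings of this one ring.\<close>

type_synonym 'k mpoly = "((nat + nat) \<Rightarrow>\<^sub>0 nat) \<Rightarrow>\<^sub>0 'k"

definition var :: "nat + nat \<Rightarrow> 'k::comm_ring_1 mpoly" where
  "var v = Poly_Mapping.single (Poly_Mapping.single v 1) 1"

definition vars_in :: "(nat + nat) set \<Rightarrow> 'k::comm_ring_1 mpoly set" where
  "vars_in V = {p. \<forall>m\<in>Poly_Mapping.keys p. Poly_Mapping.keys m \<subseteq> V}"

definition ringA :: "nat \<Rightarrow> 'k::comm_ring_1 mpoly set" where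
  "ringA n = vars_in (Inl ` {..<n-1})"
definition ringT :: "nat \<Rightarrow> 'k::comm_ring_1 mpoly set" where
  "ringT n = vars_in (Inr ` {..<n})"
definition ringAT :: "nat \<Rightarrow> 'k::comm_ring_1 mpoly set" where
  "ringAT n = vars_in (Inl ` {..<n-1} \<union> Inr ` {..<n})"

definition degX :: "((nat + nat) \<Rightarrow>\<^sub>0 nat) \<Rightarrow> nat" where
  "degX m = (\<Sum>v\<in>Poly_Mapping.keys m. if isl v then Poly_Mapping.lookup m v else 0)"

definition compA :: "nat \<Rightarrow> nat \<Rightarrow> 'k::comm_ring_1 mpoly set" where
  "compA n d = {p \<in> ringA n. \<forall>m\<in>Poly_Mapping.keys p. degX m = d}"

definition compAT :: "nat \<Rightarrow> nat \<Rightarrow> 'k::comm_ring_1 mpoly set" where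
  "compAT n \<nu> = {p \<in> ringAT n. \<forall>m\<in>Poly_Mapping.keys p. degX m = \<nu>}"

definition subst :: "(nat + nat \<Rightarrow> 'k::comm_ring_1 mpoly) \<Rightarrow> 'k mpoly \<Rightarrow> 'k mpoly" where
  "subst \<sigma> p = (\<Sum>m\<in>Poly_Mapping.keys p. Poly_Mapping.single 0 (Poly_Mapping.lookup p m) *
                     (\<Prod>v\<in>Poly_Mapping.keys m. \<sigma> v ^ Poly_Mapping.lookup m v))"

inductive_set ideal_gen :: "'a::comm_ring_1 set \<Rightarrow> 'a set \<Rightarrow> 'a set"
  for C :: "'a set" and S :: "'a set" where
  zero: "0 \<in> ideal_gen C S"
| step: "c \<in> C \<Longrightarrow> s \<in> S \<Longrightarrow> x \<in> ideal_gen C S \<Longrightarrow> c * s + x \<in> ideal_gen C S"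

definition is_ideal :: "'a::comm_ring_1 set \<Rightarrow> 'a set \<Rightarrow> bool" where
  "is_ideal C P \<longleftrightarrow> P \<subseteq> C \<and> 0 \<in> P \<and> (\<forall>x\<in>P. \<forall>y\<in>P. x + y \<in> P)
      \<and> (\<forall>a\<in>C. \<forall>x\<in>P. a * x \<in> P)"

definition is_prime_ideal :: "'a::comm_ring_1 set \<Rightarrow> 'a set \<Rightarrow> bool" where
  "is_prime_ideal C P \<longleftrightarrow> is_ideal C P \<and> P \<noteq> C \<and>
      (\<forall>a\<in>C. \<forall>b\<in>C. a * b \<in> P \<longrightarrow> a \<in> P \<or> b \<in> P)"

definition idm :: "nat \<Rightarrow> 'k::comm_ring_1 mpoly set" where
  "idm n = ideal_gen (ringA n) {var (Inl i) | i. i < n - 1}"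
definition idm_pow :: "nat \<Rightarrow> nat \<Rightarrow> 'k::comm_ring_1 mpoly set" where
  "idm_pow n t = ideal_gen (ringA n)
     {\<Prod>j<t. var (Inl (a j)) | a. \<forall>j<t. a j < n - 1}"

text \<open>ker alpha: ideal of A[T] generated by the linear forms sum b_i T_i with
  b_i in A and sum b_i f_i = 0;  Sym_A(I) = A[T] / symK.\<close>
definition symK :: "nat \<Rightarrow> (nat \<Rightarrow> 'k::comm_ring_1 mpoly) \<Rightarrow> 'k mpoly set" where
  "symK n f = ideal_gen (ringAT n)
     {(\<Sum>i<n. b i * var (Inr i)) | b. (\<forall>i<n. b i \<in> ringA n) \<and> (\<Sum>i<n. b i * f i) = 0}"

definition hmap :: "nat \<Rightarrow> (nat \<Rightarrow> 'k::comm_ring_1 mpoly) \<Rightarrow> 'k mpoly \<Rightarrow> 'k mpoly" where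
  "hmap n f = subst (\<lambda>v. case v of Inl i \<Rightarrow> var (Inl i) | Inr j \<Rightarrow> f j)"

definition ker_h :: "nat \<Rightarrow> (nat \<Rightarrow> 'k::comm_ring_1 mpoly) \<Rightarrow> 'k mpoly set" where
  "ker_h n f = {g \<in> ringT n. hmap n f g = 0}"

text \<open>Kernel of A[T] -> Rees_A(I) = A[t] (t = var (Inr n), a fresh variable), T_i |-> f_i t.\<close>
definition reesJ :: "nat \<Rightarrow> (nat \<Rightarrow> 'k::comm_ring_1 mpoly) \<Rightarrow> 'k mpoly set" where
  "reesJ n f = {g \<in> ringAT n.
     subst (\<lambda>v. case v of Inl i \<Rightarrow> var (Inl i) | Inr j \<Rightarrow> f j * var (Inr n)) g = 0}"

text \<open>I is of linear type outside V(m): for every prime p of A with m not contained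
  in p, Sym_{A_p}(I_p) -> Rees_{A_p}(I_p) is an isomorphism; since this map is the
  localisation at p of the surjection Sym_A(I) -> Rees_A(I) whose kernel is
  reesJ/symK, this says every element of reesJ is killed in Sym by some s in A - p.\<close>
definition linear_type_outside_m :: "nat \<Rightarrow> (nat \<Rightarrow> 'k::comm_ring_1 mpoly) \<Rightarrow> bool" where
  "linear_type_outside_m n f \<longleftrightarrow>
     (\<forall>P. is_prime_ideal (ringA n) P \<and> \<not> idm n \<subseteq> P \<longrightarrow>
        (\<forall>g\<in>reesJ n f. \<exists>s\<in>ringA n - P. s * g \<in> symK n f))"

text \<open>H^0_m(Sym_A(I))_nu = 0: every element of Sym_A(I)_nu (class of some p in A_nu[T])
  annihilated by a power of m is zero.\<close>
definition H0m_vanishes :: "nat \<Rightarrow> (nat \<Rightarrow> 'k::comm_ring_1 mpoly) \<Rightarrow> nat \<Rightarrow> bool" where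
  "H0m_vanishes n f \<nu> \<longleftrightarrow>
     (\<forall>p\<in>compAT n \<nu>. (\<exists>t. \<forall>q\<in>idm_pow n t. q * p \<in> symK n f) \<longrightarrow> p \<in> symK n f)"

definition ann_sym :: "nat \<Rightarrow> (nat \<Rightarrow> 'k::comm_ring_1 mpoly) \<Rightarrow> nat \<Rightarrow> 'k mpoly set" where
  "ann_sym n f \<nu> = {g \<in> ringT n. \<forall>p\<in>compAT n \<nu>. g * p \<in> symK n f}"

end

theory Submission
  imports Defs
begin

lemma pm_sum_singles:
  "p = (\<Sum>k\<in>Poly_Mapping.keys p. Poly_Mapping.single k (Poly_Mapping.lookup p k))"
proof (rule poly_mapping_eqI)
  fix x
  show "Poly_Mapping.lookup p x = Poly_Mapping.lookup (\<Sum>k\<in>Poly_Mapping.keys p. Poly_Mapping.single k (Poly_Mapping.lookup p k)) x"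
    by (simp add: lookup_sum lookup_single when_def in_keys_iff)
qed

lemma pm_sum_singles_sup:
  assumes "finite S" "Poly_Mapping.keys p \<subseteq> S"
  shows "p = (\<Sum>k\<in>S. Poly_Mapping.single k (Poly_Mapping.lookup p k))"
proof -
  have "(\<Sum>k\<in>S. Poly_Mapping.single k (Poly_Mapping.lookup p k)) =
        (\<Sum>k\<in>Poly_Mapping.keys p. Poly_Mapping.single k (Poly_Mapping.lookup p k))"
    using assms by (intro sum.mono_neutral_right) (auto simp: in_keys_iff)
  then show ?thesis using pm_sum_singles by metis
qed

definition MM :: "(nat + nat \<Rightarrow> 'k::comm_ring_1 mpoly) \<Rightarrow> ((nat + nat) \<Rightarrow>\<^sub>0 nat) \<Rightarrow> 'k mpoly" where
  "MM \<sigma> m = (\<Prod>v\<in>Poly_Mapping.keys m. \<sigma> v ^ Poly_Mapping.lookup m v)"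

lemma MM_sup:
  assumes "finite S" "Poly_Mapping.keys m \<subseteq> S"
  shows "MM \<sigma> m = (\<Prod>v\<in>S. \<sigma> v ^ Poly_Mapping.lookup m v)"
  unfolding MM_def using assms by (intro prod.mono_neutral_left) (auto simp: in_keys_iff)

lemma MM_zero[simp]: "MM \<sigma> 0 = 1"
  by (simp add: MM_def)

lemma MM_add: "MM \<sigma> (a + b) = MM \<sigma> a * MM \<sigma> b"
proof -
  let ?S = "Poly_Mapping.keys a \<union> Poly_Mapping.keys b"
  have f: "finite ?S" by simp
  have "MM \<sigma> (a + b) = (\<Prod>v\<in>?S. \<sigma> v ^ Poly_Mapping.lookup (a+b) v)"
    by (rule MM_sup[OF f keys_add])
  also have "\<dots> = (\<Prod>v\<in>?S. \<sigma> v ^ Poly_Mapping.lookup a v * \<sigma> v ^ Poly_Mapping.lookup b v)"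
    by (simp add: lookup_add power_add)
  also have "\<dots> = MM \<sigma> a * MM \<sigma> b"
    by (simp add: prod.distrib MM_sup[OF f])
  finally show ?thesis .
qed

lemma subst_MM: "subst \<sigma> p = (\<Sum>m\<in>Poly_Mapping.keys p. Poly_Mapping.single 0 (Poly_Mapping.lookup p m) * MM \<sigma> m)"
  by (simp add: subst_def MM_def)

lemma subst_sup:
  assumes "finite S" "Poly_Mapping.keys p \<subseteq> S"
  shows "subst \<sigma> p = (\<Sum>m\<in>S. Poly_Mapping.single 0 (Poly_Mapping.lookup p m) * MM \<sigma> m)"
  unfolding subst_MM using assms by (intro sum.mono_neutral_left) (auto simp: in_keys_iff)

lemma subst_zero[simp]: "subst \<sigma> 0 = 0"
  by (simp add: subst_def)

lemma subst_add: "subst \<sigma> (p + q) = subst \<sigma> p + subst \<sigma> q"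
proof -
  let ?S = "Poly_Mapping.keys p \<union> Poly_Mapping.keys q"
  have f: "finite ?S" by simp
  have "subst \<sigma> (p + q) = (\<Sum>m\<in>?S. Poly_Mapping.single 0 (Poly_Mapping.lookup (p+q) m) * MM \<sigma> m)"
    by (rule subst_sup[OF f keys_add])
  also have "\<dots> = subst \<sigma> p + subst \<sigma> q"
    by (simp add: lookup_add single_add distrib_right sum.distrib subst_sup[OF f])
  finally show ?thesis .
qed

lemma subst_sum: "subst \<sigma> (\<Sum>i\<in>I. p i) = (\<Sum>i\<in>I. subst \<sigma> (p i))"
  by (induction I rule: infinite_finite_induct) (auto simp: subst_add)

lemma subst_single: "subst \<sigma> (Poly_Mapping.single m c) = Poly_Mapping.single 0 c * MM \<sigma> m"
  by (simp add: subst_MM)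

lemma subst_mult: "subst \<sigma> (p * q) = subst \<sigma> p * subst \<sigma> q"
proof -
  have "p * q = (\<Sum>k\<in>Poly_Mapping.keys p. Poly_Mapping.single k (Poly_Mapping.lookup p k)) *
                (\<Sum>l\<in>Poly_Mapping.keys q. Poly_Mapping.single l (Poly_Mapping.lookup q l))"
    using pm_sum_singles by metis
  also have "\<dots> = (\<Sum>k\<in>Poly_Mapping.keys p. \<Sum>l\<in>Poly_Mapping.keys q.
        Poly_Mapping.single (k + l) (Poly_Mapping.lookup p k * Poly_Mapping.lookup q l))"
    by (simp add: sum_product mult_single)
  finally have e: "p * q = \<dots>" .
  have "subst \<sigma> (p * q) = (\<Sum>k\<in>Poly_Mapping.keys p. \<Sum>l\<in>Poly_Mapping.keys q.
        (Poly_Mapping.single 0 (Poly_Mapping.lookup p k) * MM \<sigma> k) * (Poly_Mapping.single 0 (Poly_Mapping.lookup q l) * MM \<sigma> l))"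
    unfolding e subst_sum subst_single
  proof (intro sum.cong refl)
    fix k l
    have "Poly_Mapping.single 0 (Poly_Mapping.lookup p k * Poly_Mapping.lookup q l) =
      Poly_Mapping.single 0 (Poly_Mapping.lookup p k) * (Poly_Mapping.single 0 (Poly_Mapping.lookup q l) :: _ mpoly)"
      by (simp add: mult_single)
    then show "Poly_Mapping.single 0 (Poly_Mapping.lookup p k * Poly_Mapping.lookup q l) * MM \<sigma> (k + l) =
      Poly_Mapping.single 0 (Poly_Mapping.lookup p k) * MM \<sigma> k * (Poly_Mapping.single 0 (Poly_Mapping.lookup q l) * MM \<sigma> l)"
      by (simp only: MM_add mult_ac)
  qed
  also have "\<dots> = subst \<sigma> p * subst \<sigma> q"
    by (simp add: subst_MM sum_product)
  finally show ?thesis .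
qed

lemma subst_one[simp]: "subst \<sigma> 1 = 1"
proof -
  have "(1::'a::comm_ring_1 mpoly) = Poly_Mapping.single 0 1" by simp
  then show ?thesis by (metis subst_single MM_zero mult_1_right)
qed

lemma subst_const: "subst \<sigma> (Poly_Mapping.single 0 c) = Poly_Mapping.single 0 c"
  by (simp add: subst_single)

lemma subst_prod: "subst \<sigma> (\<Prod>i\<in>I. p i) = (\<Prod>i\<in>I. subst \<sigma> (p i))"
  by (induction I rule: infinite_finite_induct) (auto simp: subst_mult)

lemma subst_power: "subst \<sigma> (p ^ e) = subst \<sigma> p ^ e"
  by (induction e) (auto simp: subst_mult)

lemma MM_single1: "MM \<sigma> (Poly_Mapping.single v 1) = \<sigma> v"
  unfolding MM_def by simp

lemma subst_var[simp]: "subst \<sigma> (var v) = \<sigma> v"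
  unfolding var_def subst_single MM_single1 by simp

lemma subst_MM_hom: "subst \<sigma> (MM \<tau> m) = MM (\<lambda>v. subst \<sigma> (\<tau> v)) m"
  unfolding MM_def by (simp add: subst_prod subst_power)

lemma subst_comp: "subst \<sigma> (subst \<tau> p) = subst (\<lambda>v. subst \<sigma> (\<tau> v)) p"
proof -
  have "subst \<sigma> (subst \<tau> p) = (\<Sum>m\<in>Poly_Mapping.keys p. subst \<sigma> (Poly_Mapping.single 0 (Poly_Mapping.lookup p m) * MM \<tau> m))"
    by (simp only: subst_MM[of \<tau> p] subst_sum)
  also have "\<dots> = subst (\<lambda>v. subst \<sigma> (\<tau> v)) p"
    by (simp add: subst_mult subst_const subst_MM_hom subst_MM[of "\<lambda>v. subst \<sigma> (\<tau> v)" p])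
  finally show ?thesis .
qed

lemma subst_cong:
  assumes "\<And>m v. m \<in> Poly_Mapping.keys p \<Longrightarrow> v \<in> Poly_Mapping.keys m \<Longrightarrow> \<sigma> v = \<tau> v"
  shows "subst \<sigma> p = subst \<tau> p"
  unfolding subst_def using assms by (intro sum.cong refl arg_cong2[where f="(*)"] prod.cong) auto

lemma var_power: "var v ^ e = Poly_Mapping.single (Poly_Mapping.single v e) 1"
  by (induction e) (simp_all add: var_def mult_single single_add[symmetric] add.commute)

lemma prod_single1: "(\<Prod>i\<in>I. Poly_Mapping.single (g i) (1::'a::comm_semiring_1)) = Poly_Mapping.single (\<Sum>i\<in>I. g i) 1"
  by (induction I rule: infinite_finite_induct) (auto simp: mult_single)

lemma MM_var: "MM var m = Poly_Mapping.single m 1"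
  by (simp add: MM_def var_power prod_single1 pm_sum_singles[symmetric])

lemma subst_var_id: "subst var p = p"
proof -
  have "subst var p = (\<Sum>m\<in>Poly_Mapping.keys p. Poly_Mapping.single m (Poly_Mapping.lookup p m))"
    by (simp add: subst_MM MM_var mult_single)
  then show ?thesis using pm_sum_singles by metis
qed

lemma subst_id:
  assumes "\<And>m v. m \<in> Poly_Mapping.keys p \<Longrightarrow> v \<in> Poly_Mapping.keys m \<Longrightarrow> \<sigma> v = var v"
  shows "subst \<sigma> p = p"
  using subst_cong[of p \<sigma> var] assms subst_var_id by metis


lemma keys_add_mono: "Poly_Mapping.keys ((a::'x \<Rightarrow>\<^sub>0 nat) + b) = Poly_Mapping.keys a \<union> Poly_Mapping.keys b"
  by (auto simp: in_keys_iff lookup_add)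

lemma vars_in_add:
  assumes "p \<in> vars_in V" "q \<in> vars_in V" shows "p + q \<in> vars_in V"
  unfolding vars_in_def
proof (intro CollectI ballI)
  fix m assume "m \<in> Poly_Mapping.keys (p + q)"
  then have "m \<in> Poly_Mapping.keys p \<or> m \<in> Poly_Mapping.keys q" using keys_add[of p q] by auto
  then show "Poly_Mapping.keys m \<subseteq> V" using assms unfolding vars_in_def by auto
qed

lemma vars_in_mult: "p \<in> vars_in V \<Longrightarrow> q \<in> vars_in V \<Longrightarrow> p * q \<in> vars_in V"
  unfolding vars_in_def using keys_mult[of p q] by (fastforce simp: keys_add_mono)

lemma vars_in_zero[simp]: "0 \<in> vars_in V"
  by (simp add: vars_in_def)

lemma vars_in_one[simp]: "1 \<in> vars_in V"
  by (simp add: vars_in_def)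

lemma vars_in_single: "Poly_Mapping.keys m \<subseteq> V \<Longrightarrow> Poly_Mapping.single m c \<in> vars_in V"
  by (simp add: vars_in_def)

lemma vars_in_var: "v \<in> V \<Longrightarrow> var v \<in> vars_in V"
  unfolding var_def by (rule vars_in_single) simp

lemma vars_in_sum: "(\<And>i. i \<in> I \<Longrightarrow> p i \<in> vars_in V) \<Longrightarrow> (\<Sum>i\<in>I. p i) \<in> vars_in V"
  by (induction I rule: infinite_finite_induct) (auto intro: vars_in_add)

lemma vars_in_prod: "(\<And>i. i \<in> I \<Longrightarrow> p i \<in> vars_in V) \<Longrightarrow> (\<Prod>i\<in>I. p i) \<in> vars_in V"
  by (induction I rule: infinite_finite_induct) (auto intro: vars_in_mult)

lemma vars_in_power: "p \<in> vars_in V \<Longrightarrow> p ^ e \<in> vars_in V"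
  by (induction e) (auto intro: vars_in_mult)

lemma vars_in_mono: "V \<subseteq> W \<Longrightarrow> vars_in V \<subseteq> vars_in W"
  unfolding vars_in_def by blast

lemma ideal_gen_add: "x \<in> ideal_gen C S \<Longrightarrow> y \<in> ideal_gen C S \<Longrightarrow> x + y \<in> ideal_gen C S"
proof (induction x rule: ideal_gen.induct)
  case zero then show ?case by simp
next
  case (step c s x)
  then show ?case using ideal_gen.step[of c C s S "x + y"] by (simp add: add.assoc)
qed

lemma ideal_gen_mult:
  assumes "\<And>a b. a \<in> C \<Longrightarrow> b \<in> C \<Longrightarrow> a * b \<in> C" "a \<in> C"
  shows "x \<in> ideal_gen C S \<Longrightarrow> a * x \<in> ideal_gen C S"
proof (induction x rule: ideal_gen.induct)
  case zero then show ?case by (simp add: ideal_gen.zero)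
next
  case (step c s x)
  then show ?case using ideal_gen.step[of "a * c" C s S "a * x"] assms
    by (simp add: algebra_simps)
qed

lemma ideal_gen_gen: "1 \<in> C \<Longrightarrow> s \<in> S \<Longrightarrow> s \<in> ideal_gen C S"
  using ideal_gen.step[of 1 C s S 0, OF _ _ ideal_gen.zero] by simp

lemma ideal_gen_sub:
  assumes "\<And>a b. a \<in> C \<Longrightarrow> b \<in> C \<Longrightarrow> a * b \<in> C" "\<And>a b. a \<in> C \<Longrightarrow> b \<in> C \<Longrightarrow> a + b \<in> C"
    "0 \<in> C" "S \<subseteq> C"
  shows "x \<in> ideal_gen C S \<Longrightarrow> x \<in> C"
  by (induction x rule: ideal_gen.induct) (use assms in auto)

lemma degX_sup:
  assumes "finite S" "Poly_Mapping.keys m \<subseteq> S"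
  shows "degX m = (\<Sum>v\<in>S. if isl v then Poly_Mapping.lookup m v else 0)"
  unfolding degX_def using assms by (intro sum.mono_neutral_left) (auto simp: in_keys_iff)

lemma degX_add: "degX (a + b) = degX a + degX b"
proof -
  let ?S = "Poly_Mapping.keys a \<union> Poly_Mapping.keys b"
  have f: "finite ?S" by simp
  have "degX (a+b) = (\<Sum>v\<in>?S. if isl v then Poly_Mapping.lookup (a+b) v else 0)"
    by (rule degX_sup[OF f]) (simp add: keys_add_mono)
  also have "\<dots> = (\<Sum>v\<in>?S. (if isl v then Poly_Mapping.lookup a v else 0) + (if isl v then Poly_Mapping.lookup b v else 0))"
    by (rule sum.cong) (auto simp: lookup_add)
  also have "\<dots> = degX a + degX b"
    by (simp only: sum.distrib degX_sup[OF f, symmetric] Un_upper1 Un_upper2)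
  finally show ?thesis .
qed

lemma degX_Inr: "Poly_Mapping.keys m \<subseteq> Inr ` X \<Longrightarrow> degX m = 0"
  unfolding degX_def by (intro sum.neutral) auto

lemma degX_Inl: "Poly_Mapping.keys m \<subseteq> Inl ` X \<Longrightarrow> degX m = (\<Sum>v\<in>Poly_Mapping.keys m. Poly_Mapping.lookup m v)"
  unfolding degX_def by (intro sum.cong) auto

lemma sum_single_inj_zero:
  assumes "inj_on \<phi> (Poly_Mapping.keys p)"
    and "(\<Sum>k\<in>Poly_Mapping.keys p. Poly_Mapping.single (\<phi> k) (Poly_Mapping.lookup p k)) = 0"
  shows "p = 0"
proof (rule ccontr)
  assume "p \<noteq> 0"
  then obtain k0 where k0: "k0 \<in> Poly_Mapping.keys p"
    by (metis all_not_in_conv keys_eq_empty)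
  have "0 = Poly_Mapping.lookup (\<Sum>k\<in>Poly_Mapping.keys p. Poly_Mapping.single (\<phi> k) (Poly_Mapping.lookup p k)) (\<phi> k0)"
    using assms(2) by simp
  also have "\<dots> = (\<Sum>k\<in>Poly_Mapping.keys p. if k = k0 then Poly_Mapping.lookup p k else 0)"
    unfolding lookup_sum
  proof (intro sum.cong refl)
    fix k assume k: "k \<in> Poly_Mapping.keys p"
    have "\<phi> k = \<phi> k0 \<longleftrightarrow> k = k0" using inj_onD[OF assms(1) _ k k0] by auto
    then show "Poly_Mapping.lookup (Poly_Mapping.single (\<phi> k) (Poly_Mapping.lookup p k)) (\<phi> k0) =
        (if k = k0 then Poly_Mapping.lookup p k else 0)"
      by (simp add: lookup_single when_def)
  qed
  also have "\<dots> = Poly_Mapping.lookup p k0" using k0 by simp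
  finally show False using k0 by (simp add: in_keys_iff)
qed

lemma mult_monom_zero:
  fixes p :: "'k::comm_ring_1 mpoly"
  assumes "p * Poly_Mapping.single \<mu> 1 = 0"
  shows "p = 0"
proof -
  have "p * Poly_Mapping.single \<mu> 1 = (\<Sum>k\<in>Poly_Mapping.keys p. Poly_Mapping.single (k + \<mu>) (Poly_Mapping.lookup p k))"
    by (subst pm_sum_singles) (simp add: sum_distrib_right mult_single)
  moreover have "inj_on (\<lambda>k. k + \<mu>) (Poly_Mapping.keys p)"
    by (rule inj_onI) simp
  ultimately show ?thesis using assms sum_single_inj_zero[of "\<lambda>k. k + \<mu>" p] by simp
qed


definition tW :: "nat \<Rightarrow> nat \<Rightarrow> nat + nat \<Rightarrow> 'k::comm_ring_1 mpoly" where
  "tW n d v = (if v = Inr n then var (Inr n) ^ d else var v)"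

lemma MM_tW:
  assumes "d \<ge> 1"
  shows "MM (tW n d) m = Poly_Mapping.single (m + Poly_Mapping.single (Inr n) ((d-1) * Poly_Mapping.lookup m (Inr n))) 1"
proof -
  let ?t = "var (Inr n) :: 'a mpoly"
  have pw: "tW n d v ^ e = var v ^ e * (if v = Inr n then ?t ^ ((d-1)*e) else 1)" for v e
  proof (cases "v = Inr n")
    case True
    have "d * e = e + (d-1)*e" using assms by (simp add: algebra_simps)
    then show ?thesis using True by (simp add: tW_def power_mult[symmetric] power_add)
  qed (simp add: tW_def)
  have "MM (tW n d) m = (\<Prod>v\<in>Poly_Mapping.keys m. var v ^ Poly_Mapping.lookup m v) *
      (\<Prod>v\<in>Poly_Mapping.keys m. if v = Inr n then ?t ^ ((d-1) * Poly_Mapping.lookup m v) else 1)"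
    unfolding MM_def pw prod.distrib by simp
  also have "(\<Prod>v\<in>Poly_Mapping.keys m. var v ^ Poly_Mapping.lookup m v) = Poly_Mapping.single m 1"
    using MM_var[of m] unfolding MM_def .
  also have "(\<Prod>v\<in>Poly_Mapping.keys m. if v = Inr n then ?t ^ ((d-1) * Poly_Mapping.lookup m v) else 1)
      = ?t ^ ((d-1) * Poly_Mapping.lookup m (Inr n))"
    by (simp add: prod.delta in_keys_iff)
  finally show ?thesis by (simp add: var_power mult_single)
qed

lemma subst_tW_inj:
  fixes p :: "'k::comm_ring_1 mpoly"
  assumes "d \<ge> 1" "subst (tW n d) p = 0"
  shows "p = 0"
proof -
  define \<Psi> where "\<Psi> m = m + Poly_Mapping.single (Inr n) ((d-1) * Poly_Mapping.lookup m (Inr n))" for m :: "(nat + nat) \<Rightarrow>\<^sub>0 nat"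
  have "subst (tW n d) p = (\<Sum>m\<in>Poly_Mapping.keys p. Poly_Mapping.single (\<Psi> m) (Poly_Mapping.lookup p m))"
    unfolding subst_MM MM_tW[OF assms(1)] \<Psi>_def by (simp add: mult_single)
  moreover have "inj_on \<Psi> (Poly_Mapping.keys p)"
  proof (rule inj_onI)
    fix a b assume e: "\<Psi> a = \<Psi> b"
    show "a = b"
    proof (rule poly_mapping_eqI)
      fix w
      have "Poly_Mapping.lookup (\<Psi> a) w = Poly_Mapping.lookup (\<Psi> b) w" using e by simp
      then have *: "Poly_Mapping.lookup a w + (if w = Inr n then (d-1) * Poly_Mapping.lookup a (Inr n) else 0) =
                 Poly_Mapping.lookup b w + (if w = Inr n then (d-1) * Poly_Mapping.lookup b (Inr n) else 0)"
        by (auto simp: \<Psi>_def lookup_add lookup_single when_def)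
      show "Poly_Mapping.lookup a w = Poly_Mapping.lookup b w"
      proof (cases "w = Inr n")
        case True
        then have "d * Poly_Mapping.lookup a w = d * Poly_Mapping.lookup b w"
          using * assms(1) by (simp add: algebra_simps)
        then show ?thesis using assms(1) by simp
      qed (use * in simp)
    qed
  qed
  ultimately show ?thesis using assms(2) sum_single_inj_zero[of \<Psi> p] by simp
qed

definition tD :: "nat \<Rightarrow> nat + nat \<Rightarrow> 'k::comm_ring_1 mpoly" where
  "tD n v = (case v of Inl i \<Rightarrow> var (Inr n) * var (Inl i) | Inr j \<Rightarrow> var (Inr j))"

lemma subst_tD:
  assumes "p \<in> compA n d"
  shows "subst (tD n) p = var (Inr n) ^ d * p"
proof -
  let ?t = "var (Inr n) :: 'a mpoly"
  have M: "MM (tD n) m = ?t ^ d * Poly_Mapping.single m 1" if m: "m \<in> Poly_Mapping.keys p" for m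
  proof -
    have km: "Poly_Mapping.keys m \<subseteq> Inl ` {..<n-1}" and dm: "degX m = d"
      using assms m unfolding compA_def ringA_def vars_in_def by auto
    have "MM (tD n) m = (\<Prod>v\<in>Poly_Mapping.keys m. (?t * var v) ^ Poly_Mapping.lookup m v)"
      unfolding MM_def using km by (intro prod.cong refl) (auto simp: tD_def)
    also have "\<dots> = (\<Prod>v\<in>Poly_Mapping.keys m. ?t ^ Poly_Mapping.lookup m v) * (\<Prod>v\<in>Poly_Mapping.keys m. var v ^ Poly_Mapping.lookup m v)"
      by (simp add: power_mult_distrib prod.distrib)
    also have "(\<Prod>v\<in>Poly_Mapping.keys m. ?t ^ Poly_Mapping.lookup m v) = ?t ^ d"
      using degX_Inl[OF km] dm by (simp add: power_sum)
    also have "(\<Prod>v\<in>Poly_Mapping.keys m. var v ^ Poly_Mapping.lookup m v) = Poly_Mapping.single m 1"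
      using MM_var[of m] unfolding MM_def .
    finally show ?thesis .
  qed
  have "subst (tD n) p = (\<Sum>m\<in>Poly_Mapping.keys p. ?t ^ d * Poly_Mapping.single m (Poly_Mapping.lookup p m))"
    unfolding subst_MM
  proof (intro sum.cong refl)
    fix m assume "m \<in> Poly_Mapping.keys p"
    then have "Poly_Mapping.single 0 (Poly_Mapping.lookup p m) * MM (tD n) m =
        ?t ^ d * (Poly_Mapping.single 0 (Poly_Mapping.lookup p m) * Poly_Mapping.single m 1)"
      by (simp only: M mult.left_commute)
    also have "Poly_Mapping.single 0 (Poly_Mapping.lookup p m) * Poly_Mapping.single m 1 = Poly_Mapping.single m (Poly_Mapping.lookup p m)"
      by (simp add: mult_single)
    finally show "Poly_Mapping.single 0 (Poly_Mapping.lookup p m) * MM (tD n) m = ?t ^ d * Poly_Mapping.single m (Poly_Mapping.lookup p m)" .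
  qed
  also have "\<dots> = ?t ^ d * p"
    by (subst (2) pm_sum_singles) (simp add: sum_distrib_left)
  finally show ?thesis .
qed

lemma pigeon:
  fixes a :: "nat \<Rightarrow> nat"
  assumes "\<forall>j<t. a j < N" "t = N * E" "N \<ge> 1"
  shows "\<exists>i<N. card {j. j < t \<and> a j = i} \<ge> E"
proof (rule ccontr)
  assume "\<not> ?thesis"
  then have lt: "\<forall>i<N. card {j. j < t \<and> a j = i} < E" by auto
  then have E: "E \<ge> 1" using assms(3) by fastforce
  have "{..<t} = (\<Union>i\<in>{..<N}. {j. j < t \<and> a j = i})" using assms(1) by auto
  then have "t = card (\<Union>i\<in>{..<N}. {j. j < t \<and> a j = i})" by (metis card_lessThan)
  also have "\<dots> \<le> (\<Sum>i\<in>{..<N}. card {j. j < t \<and> a j = i})" by (rule card_UN_le) simp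
  also have "\<dots> \<le> (\<Sum>i\<in>{..<N}. E - 1)" by (rule sum_mono) (use lt in fastforce)
  also have "\<dots> = N * (E - 1)" by simp
  finally have "N * E \<le> N * (E - 1)" using assms(2) by simp
  then show False using E assms(3)
    by (metis One_nat_def diff_less less_le_trans mult_le_cancel1 not_le zero_less_one)
qed


lemma prime_avoid:
  fixes C J :: "'a::comm_ring_1 set" and x :: 'a
  assumes Cmul: "\<And>a b. a \<in> C \<Longrightarrow> b \<in> C \<Longrightarrow> a * b \<in> C"
    and Cadd: "\<And>a b. a \<in> C \<Longrightarrow> b \<in> C \<Longrightarrow> a + b \<in> C"
    and C0: "0 \<in> C" and C1: "1 \<in> C" and xC: "x \<in> C"
    and J: "is_ideal C J" and nop: "\<forall>e. x ^ e \<notin> J"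
  shows "\<exists>P. is_prime_ideal C P \<and> J \<subseteq> P \<and> x \<notin> P"
proof -
  define A where "A = {I. is_ideal C I \<and> J \<subseteq> I \<and> (\<forall>e. x ^ e \<notin> I)}"
  have "\<exists>U\<in>A. \<forall>X\<in>Ch. X \<subseteq> U" if Ch: "Ch \<in> chains A" for Ch
  proof (cases "Ch = {}")
    case True
    then show ?thesis using J nop unfolding A_def by auto
  next
    case False
    have chA: "Ch \<subseteq> A" and chn: "\<forall>X\<in>Ch. \<forall>Y\<in>Ch. X \<subseteq> Y \<or> Y \<subseteq> X"
      using Ch unfolding chains_def chain_subset_def by auto
    have "is_ideal C (\<Union>Ch)"
      unfolding is_ideal_def
    proof (intro conjI ballI)
      show "\<Union>Ch \<subseteq> C" using chA unfolding A_def is_ideal_def by auto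
      show "0 \<in> \<Union>Ch" using chA False unfolding A_def is_ideal_def by auto
      fix u v assume u: "u \<in> \<Union>Ch" and v: "v \<in> \<Union>Ch"
      then obtain X Y where X: "X \<in> Ch" "u \<in> X" and Y: "Y \<in> Ch" "v \<in> Y" by auto
      show "u + v \<in> \<Union>Ch"
      proof (cases "X \<subseteq> Y")
        case True
        then have "u + v \<in> Y" using X Y chA unfolding A_def is_ideal_def by blast
        then show ?thesis using Y by auto
      next
        case False
        then have "Y \<subseteq> X" using chn X Y by blast
        then have "u + v \<in> X" using X Y chA unfolding A_def is_ideal_def by blast
        then show ?thesis using X by auto
      qed
    next
      fix a u assume a: "a \<in> C" and u: "u \<in> \<Union>Ch"
      then obtain X where X: "X \<in> Ch" "u \<in> X" by auto
      then have "a * u \<in> X" using a chA unfolding A_def is_ideal_def by blast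
      then show "a * u \<in> \<Union>Ch" using X by auto
    qed
    moreover have "J \<subseteq> \<Union>Ch" using chA False unfolding A_def by auto
    moreover have "\<forall>e. x ^ e \<notin> \<Union>Ch" using chA unfolding A_def by auto
    ultimately show ?thesis unfolding A_def by blast
  qed
  then obtain P where PA: "P \<in> A" and Pmax: "\<forall>X\<in>A. P \<subseteq> X \<longrightarrow> X = P"
    using Zorn_Lemma2[of A] by blast
  have Pid: "is_ideal C P" and JP: "J \<subseteq> P" and Pnop: "\<forall>e. x ^ e \<notin> P"
    using PA unfolding A_def by auto
  have PC: "P \<subseteq> C" and P0: "0 \<in> P" and Padd: "\<And>u v. u \<in> P \<Longrightarrow> v \<in> P \<Longrightarrow> u + v \<in> P"
    and Pmul: "\<And>a u. a \<in> C \<Longrightarrow> u \<in> P \<Longrightarrow> a * u \<in> P"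
    using Pid unfolding is_ideal_def by auto
  have key: "\<exists>e p c. p \<in> P \<and> c \<in> C \<and> x ^ e = p + c * a" if a: "a \<in> C" "a \<notin> P" for a
  proof -
    define Pa where "Pa = {p + c * a | p c. p \<in> P \<and> c \<in> C}"
    have "is_ideal C Pa"
      unfolding is_ideal_def
    proof (intro conjI ballI)
      show "Pa \<subseteq> C" unfolding Pa_def using PC a Cadd Cmul by auto
      show "0 \<in> Pa" unfolding Pa_def using P0 C0 by force
      fix u v assume "u \<in> Pa" "v \<in> Pa"
      then obtain p1 c1 p2 c2 where "u = p1 + c1 * a" "v = p2 + c2 * a" "p1 \<in> P" "p2 \<in> P" "c1 \<in> C" "c2 \<in> C"
        unfolding Pa_def by auto
      moreover have "u + v = (p1 + p2) + (c1 + c2) * a" using \<open>u = p1 + c1 * a\<close> \<open>v = p2 + c2 * a\<close> by (simp add: algebra_simps)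
      ultimately show "u + v \<in> Pa" unfolding Pa_def using Padd Cadd by blast
    next
      fix r u assume r: "r \<in> C" and "u \<in> Pa"
      then obtain p1 c1 where "u = p1 + c1 * a" "p1 \<in> P" "c1 \<in> C"
        unfolding Pa_def by auto
      moreover have "r * u = r * p1 + (r * c1) * a" using \<open>u = p1 + c1 * a\<close> by (simp add: algebra_simps)
      ultimately show "r * u \<in> Pa" unfolding Pa_def using r Pmul Cmul by blast
    qed
    moreover have "P \<subseteq> Pa" unfolding Pa_def
    proof
      fix p assume "p \<in> P" then show "p \<in> {p + c * a |p c. p \<in> P \<and> c \<in> C}"
        using C0 by (intro CollectI exI[of _ p] exI[of _ 0]) auto
    qed
    moreover have "a \<in> Pa" unfolding Pa_def using P0 C1 by (intro CollectI exI[of _ 0] exI[of _ 1]) auto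
    ultimately have "Pa \<notin> A" using Pmax a(2) by blast
    moreover have "J \<subseteq> Pa" using JP \<open>P \<subseteq> Pa\<close> by blast
    ultimately obtain e where "x ^ e \<in> Pa" using \<open>is_ideal C Pa\<close> unfolding A_def by blast
    then show ?thesis unfolding Pa_def by blast
  qed
  have "is_prime_ideal C P"
    unfolding is_prime_ideal_def
  proof (intro conjI ballI impI)
    show "is_ideal C P" by (rule Pid)
    show "P \<noteq> C" using Pnop[rule_format, of 0] C1 by auto
    fix a b assume a: "a \<in> C" and b: "b \<in> C" and ab: "a * b \<in> P"
    show "a \<in> P \<or> b \<in> P"
    proof (rule ccontr)
      assume "\<not> (a \<in> P \<or> b \<in> P)"
      then obtain e p1 c1 f p2 c2 where 1: "p1 \<in> P" "c1 \<in> C" "x ^ e = p1 + c1 * a"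
        and 2: "p2 \<in> P" "c2 \<in> C" "x ^ f = p2 + c2 * b"
        using key a b by meson
      have "x ^ (e + f) = (p1 + c1 * a) * (p2 + c2 * b)" using 1 2 by (simp add: power_add)
      also have "\<dots> = (p2 + c2 * b) * p1 + (c1 * a) * p2 + (c1 * c2) * (a * b)"
        by (simp add: algebra_simps)
      also have "\<dots> \<in> P"
      proof -
        have "p2 + c2 * b \<in> C" using 2 PC b Cadd Cmul by blast
        then have i1: "(p2 + c2 * b) * p1 \<in> P" using Pmul 1 by blast
        have i2: "(c1 * a) * p2 \<in> P" using Pmul Cmul 1 2 a by blast
        have i3: "(c1 * c2) * (a * b) \<in> P" using Pmul Cmul 1 2 ab by blast
        show ?thesis using Padd i1 i2 i3 by blast
      qed
      finally show False using Pnop by blast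
    qed
  qed
  moreover have "x \<notin> P" using Pnop[rule_format, of 1] by simp
  ultimately show ?thesis using JP by blast
qed


lemma ringA_sub_AT: "ringA n \<subseteq> ringAT n"
  unfolding ringA_def ringAT_def by (rule vars_in_mono) auto

lemma ringT_sub_AT: "ringT n \<subseteq> ringAT n"
  unfolding ringT_def ringAT_def by (rule vars_in_mono) auto

lemma subst_fix_A:
  assumes "p \<in> ringA n" "\<And>i. i < n - 1 \<Longrightarrow> \<sigma> (Inl i) = var (Inl i)"
  shows "subst \<sigma> p = p"
proof (rule subst_id)
  fix m v assume "m \<in> Poly_Mapping.keys p" "v \<in> Poly_Mapping.keys m"
  then have "v \<in> Inl ` {..<n-1}" using assms(1) unfolding ringA_def vars_in_def by auto
  then show "\<sigma> v = var v" using assms(2) by auto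
qed

lemma symK_sub_AT: "symK n f \<subseteq> ringAT n"
proof
  fix x assume "x \<in> symK n f"
  then show "x \<in> ringAT n" unfolding symK_def
  proof (rule ideal_gen_sub[rotated 4])
    show "a * b \<in> ringAT n" if "a \<in> ringAT n" "b \<in> ringAT n" for a b
      using that unfolding ringAT_def by (rule vars_in_mult)
    show "a + b \<in> ringAT n" if "a \<in> ringAT n" "b \<in> ringAT n" for a b
      using that unfolding ringAT_def by (rule vars_in_add)
    show "0 \<in> ringAT n" unfolding ringAT_def by simp
    show "{\<Sum>i<n. b i * var (Inr i) |b. (\<forall>i<n. b i \<in> ringA n) \<and> (\<Sum>i<n. b i * f i) = 0} \<subseteq> ringAT n"
    proof clarify
      fix b :: "nat \<Rightarrow> 'a mpoly" assume "\<forall>i<n. b i \<in> ringA n"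
      then show "(\<Sum>i<n. b i * var (Inr i)) \<in> ringAT n"
        unfolding ringAT_def using ringA_sub_AT[of n] unfolding ringAT_def
        by (intro vars_in_sum vars_in_mult vars_in_var) auto
    qed
  qed
qed

lemma symK_add: "x \<in> symK n f \<Longrightarrow> y \<in> symK n f \<Longrightarrow> x + y \<in> symK n f"
  unfolding symK_def by (rule ideal_gen_add)

lemma symK_mult: "a \<in> ringAT n \<Longrightarrow> x \<in> symK n f \<Longrightarrow> a * x \<in> symK n f"
  unfolding symK_def by (rule ideal_gen_mult[where C="ringAT n"]) (auto simp: ringAT_def intro: vars_in_mult)

lemma symK_zero: "0 \<in> symK n f"
  unfolding symK_def by (rule ideal_gen.zero)

definition sigR :: "nat \<Rightarrow> (nat \<Rightarrow> 'k::comm_ring_1 mpoly) \<Rightarrow> nat + nat \<Rightarrow> 'k mpoly" where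
  "sigR n f = (\<lambda>v. case v of Inl i \<Rightarrow> var (Inl i) | Inr j \<Rightarrow> f j * var (Inr n))"

lemma symK_rees:
  assumes fA: "\<forall>i<n. f i \<in> ringA n"
  shows "x \<in> symK n f \<Longrightarrow> subst (sigR n f) x = 0"
  unfolding symK_def
proof (induction x rule: ideal_gen.induct)
  case zero then show ?case by simp
next
  case (step c s x)
  from step(2) obtain b where b: "s = (\<Sum>i<n. b i * var (Inr i))" "\<forall>i<n. b i \<in> ringA n" "(\<Sum>i<n. b i * f i) = 0"
    by auto
  have "subst (sigR n f) s = (\<Sum>i<n. b i * (f i * var (Inr n)))"
    unfolding b(1) subst_sum subst_mult subst_var
  proof (intro sum.cong refl)
    fix i assume "i \<in> {..<n}"
    then have "subst (sigR n f) (b i) = b i" using b(2) by (intro subst_fix_A[of _ n]) (auto simp: sigR_def)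
    then show "subst (sigR n f) (b i) * sigR n f (Inr i) = b i * (f i * var (Inr n))" by (simp add: sigR_def)
  qed
  also have "\<dots> = (\<Sum>i<n. b i * f i) * var (Inr n)" by (simp add: sum_distrib_right mult.assoc)
  finally have "subst (sigR n f) s = 0" using b(3) by simp
  then show ?case using step by (simp add: subst_add subst_mult)
qed


lemma ann_sub_ker:
  fixes f :: "nat \<Rightarrow> 'k::field mpoly"
  assumes n3: "n \<ge> 3" and fA: "\<forall>i<n. f i \<in> ringA n"
    and g: "g \<in> ann_sym n f \<nu>"
  shows "g \<in> ker_h n f"
proof -
  have gT: "g \<in> ringT n" and gann: "\<forall>p\<in>compAT n \<nu>. g * p \<in> symK n f"
    using g unfolding ann_sym_def by auto
  define p0 :: "'k mpoly" where "p0 = var (Inl 0) ^ \<nu>"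
  have p0s: "p0 = Poly_Mapping.single (Poly_Mapping.single (Inl 0) \<nu>) 1"
    unfolding p0_def by (rule var_power)
  have p0A: "p0 \<in> ringA n" unfolding p0_def ringA_def using n3
    by (intro vars_in_power vars_in_var) auto
  have "p0 \<in> compAT n \<nu>"
    unfolding compAT_def using p0A ringA_sub_AT[of n] by (auto simp: p0s degX_def)
  then have "g * p0 \<in> symK n f" using gann by blast
  then have "subst (sigR n f) (g * p0) = 0" using symK_rees[OF fA] by blast
  moreover have "subst (sigR n f) p0 = p0" using p0A by (intro subst_fix_A[of _ n]) (auto simp: sigR_def)
  ultimately have "subst (sigR n f) g * Poly_Mapping.single (Poly_Mapping.single (Inl 0) \<nu>) 1 = 0"
    by (simp add: subst_mult p0s)
  then have R0: "subst (sigR n f) g = 0" by (rule mult_monom_zero)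
  define E :: "nat + nat \<Rightarrow> 'k mpoly" where "E = (\<lambda>v. if v = Inr n then 1 else var v)"
  have "subst E (subst (sigR n f) g) = subst (\<lambda>v. subst E (sigR n f v)) g" by (rule subst_comp)
  also have "\<dots> = hmap n f g"
    unfolding hmap_def
  proof (rule subst_cong)
    fix m v assume "m \<in> Poly_Mapping.keys g" "v \<in> Poly_Mapping.keys m"
    then obtain j where v: "v = Inr j" "j < n" using gT unfolding ringT_def vars_in_def by auto
    have "subst E (f j) = f j" using fA v(2) by (intro subst_fix_A[of _ n]) (auto simp: E_def)
    then show "subst E (sigR n f v) = (case v of Inl i \<Rightarrow> var (Inl i) | Inr j \<Rightarrow> f j)"
      using v by (simp add: sigR_def subst_mult E_def)
  qed
  finally have "hmap n f g = 0" using R0 by simp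
  then show ?thesis using gT unfolding ker_h_def by blast
qed


lemma ker_rees:
  fixes f :: "nat \<Rightarrow> 'k::field mpoly"
  assumes d1: "d \<ge> 1" and fc: "\<forall>i<n. f i \<in> compA n d"
    and g: "g \<in> ker_h n f"
  shows "subst (sigR n f) g = 0"
proof -
  have gT: "g \<in> ringT n" and h0: "hmap n f g = 0" using g unfolding ker_h_def by auto
  have fA: "\<forall>i<n. f i \<in> ringA n" using fc unfolding compA_def by auto
  let ?t = "var (Inr n) :: 'k mpoly"
  have "subst (tW n d) (subst (sigR n f) g) = subst (\<lambda>v. subst (tW n d) (sigR n f v)) g"
    by (rule subst_comp)
  also have "\<dots> = subst (\<lambda>v. subst (tD n) (case v of Inl i \<Rightarrow> var (Inl i) | Inr j \<Rightarrow> f j)) g"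
  proof (rule subst_cong)
    fix m v assume "m \<in> Poly_Mapping.keys g" "v \<in> Poly_Mapping.keys m"
    then obtain j where v: "v = Inr j" "j < n" using gT unfolding ringT_def vars_in_def by auto
    have "subst (tW n d) (f j) = f j" using fA v(2) by (intro subst_fix_A[of _ n]) (auto simp: tW_def)
    moreover have "subst (tD n) (f j) = ?t ^ d * f j" using fc v(2) by (intro subst_tD) auto
    ultimately show "subst (tW n d) (sigR n f v) = subst (tD n) (case v of Inl i \<Rightarrow> var (Inl i) | Inr j \<Rightarrow> f j)"
      using v by (simp add: sigR_def subst_mult tW_def mult.commute)
  qed
  also have "\<dots> = subst (tD n) (hmap n f g)"
    unfolding hmap_def by (rule subst_comp[symmetric])
  also have "\<dots> = 0" using h0 by simp
  finally show ?thesis using subst_tW_inj[OF d1] by blast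
qed

lemma prod_in_ideal:
  assumes Jid: "is_ideal (ringA n) J" and Ei: "\<forall>i<n-1. var (Inl i) ^ E \<in> J"
    and a: "\<forall>j<(n-1)*E. a j < n - 1" and n2: "n \<ge> 2"
  shows "(\<Prod>j<(n-1)*E. var (Inl (a j))) \<in> J"
proof -
  let ?t = "(n-1)*E"
  obtain i where i: "i < n - 1" and ci: "card {j. j < ?t \<and> a j = i} \<ge> E"
  proof -
    have "n - 1 \<ge> 1" using n2 by simp
    then show ?thesis using that pigeon[of ?t a "n-1" E] a by blast
  qed
  define A where "A = {j. j < ?t \<and> a j = i}"
  have Asub: "A \<subseteq> {..<?t}" unfolding A_def by auto
  have "(\<Prod>j<?t. var (Inl (a j))) = (\<Prod>j\<in>{..<?t} - A. var (Inl (a j))) * (\<Prod>j\<in>A. var (Inl (a j)))"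
    by (rule prod.subset_diff[OF Asub]) simp
  also have "(\<Prod>j\<in>A. var (Inl (a j))) = (\<Prod>j\<in>A. var (Inl i))" unfolding A_def by (rule prod.cong) auto
  also have "\<dots> = var (Inl i) ^ card A" by simp
  also have "\<dots> = var (Inl i) ^ (card A - E) * var (Inl i) ^ E"
    using ci unfolding A_def by (simp add: power_add[symmetric])
  finally have eq: "(\<Prod>j<?t. var (Inl (a j))) = ((\<Prod>j\<in>{..<?t} - A. var (Inl (a j))) * var (Inl i) ^ (card A - E)) * var (Inl i) ^ E"
    by (simp add: mult.assoc)
  have "(\<Prod>j\<in>{..<?t} - A. var (Inl (a j))) * var (Inl i) ^ (card A - E) \<in> ringA n"
    unfolding ringA_def using a i by (intro vars_in_mult vars_in_prod vars_in_power vars_in_var) auto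
  then show ?thesis unfolding eq using Jid Ei i unfolding is_ideal_def by blast
qed


lemma ker_sub_ann:
  fixes f :: "nat \<Rightarrow> 'k::field mpoly"
  assumes n3: "n \<ge> 3" and d1: "d \<ge> 1" and fc: "\<forall>i<n. f i \<in> compA n d"
    and lin: "linear_type_outside_m n f" and H: "H0m_vanishes n f \<nu>"
    and g: "g \<in> ker_h n f"
  shows "g \<in> ann_sym n f \<nu>"
proof -
  have gT: "g \<in> ringT n" using g unfolding ker_h_def by auto
  have R0: "subst (sigR n f) g = 0" by (rule ker_rees[OF d1 fc g])
  have cA_mult: "a * b \<in> ringA n" if "a \<in> ringA n" "b \<in> ringA n" for a b
    using that unfolding ringA_def by (rule vars_in_mult)
  have cA_add: "a + b \<in> ringA n" if "a \<in> ringA n" "b \<in> ringA n" for a b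
    using that unfolding ringA_def by (rule vars_in_add)
  have cA0: "0 \<in> ringA n" and cA1: "1 \<in> ringA n" unfolding ringA_def by simp_all
  have XA: "var (Inl i) \<in> ringA n" if "i < n - 1" for i
    unfolding ringA_def using that by (intro vars_in_var) auto
  have "g * p \<in> symK n f" if p: "p \<in> compAT n \<nu>" for p
  proof -
    define g' where "g' = g * p"
    have pAT: "p \<in> ringAT n" using p unfolding compAT_def by auto
    have g'AT: "g' \<in> ringAT n" unfolding g'_def using gT ringT_sub_AT[of n] pAT
      unfolding ringAT_def by (intro vars_in_mult) auto
    have "subst (sigR n f) g' = 0" unfolding g'_def by (simp add: subst_mult R0)
    then have g'J: "g' \<in> reesJ n f" using g'AT unfolding reesJ_def sigR_def by simp
    have g'c: "g' \<in> compAT n \<nu>"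
      unfolding compAT_def
    proof (intro CollectI conjI ballI)
      show "g' \<in> ringAT n" by (rule g'AT)
      fix m assume "m \<in> Poly_Mapping.keys g'"
      then obtain a b where m: "m = a + b" "a \<in> Poly_Mapping.keys g" "b \<in> Poly_Mapping.keys p"
        using keys_mult[of g p] unfolding g'_def by blast
      have "Poly_Mapping.keys a \<subseteq> Inr ` {..<n}" using m(2) gT unfolding ringT_def vars_in_def by auto
      then have "degX a = 0" by (rule degX_Inr)
      moreover have "degX b = \<nu>" using m(3) p unfolding compAT_def by auto
      ultimately show "degX m = \<nu>" using m(1) by (simp add: degX_add)
    qed
    define J where "J = {s \<in> ringA n. s * g' \<in> symK n f}"
    have Jid: "is_ideal (ringA n) J"
      unfolding is_ideal_def
    proof (intro conjI ballI)
      show "J \<subseteq> ringA n" unfolding J_def by auto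
      show "0 \<in> J" unfolding J_def using cA0 symK_zero by auto
      fix x y assume "x \<in> J" "y \<in> J"
      then show "x + y \<in> J" unfolding J_def using cA_add symK_add by (auto simp: distrib_right)
    next
      fix a x :: "'k mpoly" assume a: "a \<in> ringA n" and x: "x \<in> J"
      then have "a * (x * g') \<in> symK n f" using ringA_sub_AT[of n] symK_mult unfolding J_def by blast
      then show "a * x \<in> J" using a x cA_mult unfolding J_def by (auto simp: mult.assoc)
    qed
    have pow: "\<exists>e. var (Inl i) ^ e \<in> J" if i: "i < n - 1" for i
    proof (rule ccontr)
      assume "\<not> ?thesis"
      then obtain P where P: "is_prime_ideal (ringA n) P" "J \<subseteq> P" "var (Inl i) \<notin> P"
        using prime_avoid[of "ringA n" "var (Inl i)" J] cA_mult cA_add cA0 cA1 XA[OF i] Jid by blast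
      have "var (Inl i) \<in> idm n" unfolding idm_def using i cA1 by (intro ideal_gen_gen) auto
      then have "\<not> idm n \<subseteq> P" using P(3) by blast
      then obtain s where "s \<in> ringA n - P" "s * g' \<in> symK n f"
        using lin P(1) g'J unfolding linear_type_outside_m_def by blast
      then show False using P(2) unfolding J_def by blast
    qed
    then have "\<forall>i. \<exists>e. i < n - 1 \<longrightarrow> var (Inl i) ^ e \<in> J" by blast
    then obtain ee where ee: "\<forall>i<n-1. var (Inl i) ^ ee i \<in> J" by metis
    define E where "E = (\<Sum>i<n-1. ee i)"
    have EJ: "\<forall>i<n-1. var (Inl i) ^ E \<in> J"
    proof (intro allI impI)
      fix i assume i: "i < n - 1"
      have "ee i \<le> E" unfolding E_def using i by (intro member_le_sum) auto
      then have "var (Inl i) ^ E = var (Inl i) ^ (E - ee i) * var (Inl i) ^ ee i"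
        by (simp add: power_add[symmetric])
      moreover have "var (Inl i) ^ (E - ee i) \<in> ringA n" using XA[OF i] unfolding ringA_def by (rule vars_in_power)
      moreover have "var (Inl i) ^ ee i \<in> J" using ee i by blast
      ultimately show "var (Inl i) ^ E \<in> J" using Jid unfolding is_ideal_def by metis
    qed
    have "q \<in> J" if q: "q \<in> idm_pow n ((n-1)*E)" for q
      using q unfolding idm_pow_def
    proof (induction q rule: ideal_gen.induct)
      case zero then show ?case using Jid unfolding is_ideal_def by auto
    next
      case (step c s x)
      from step(2) obtain a where s: "s = (\<Prod>j<(n-1)*E. var (Inl (a j)))" "\<forall>j<(n-1)*E. a j < n - 1" by auto
      have "s \<in> J" unfolding s(1) by (rule prod_in_ideal[OF Jid EJ s(2)]) (use n3 in simp)
      then have "c * s \<in> J" using step(1) Jid unfolding is_ideal_def by auto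
      then show ?case using step(4) Jid unfolding is_ideal_def by auto
    qed
    then have "\<exists>t. \<forall>q\<in>idm_pow n t. q * g' \<in> symK n f" unfolding J_def by blast
    then have "g' \<in> symK n f" using H g'c unfolding H0m_vanishes_def by blast
    then show ?thesis unfolding g'_def .
  qed
  then show ?thesis using gT unfolding ann_sym_def by blast
qed

theorem mainTheorem14:
  fixes n d :: nat and f :: "nat \<Rightarrow> 'k::field mpoly" and \<eta> :: int
  assumes "n \<ge> 3" and "d \<ge> 1"
    and "\<forall>i<n. f i \<in> compA n d \<and> f i \<noteq> 0"
    and "linear_type_outside_m n f"
    and "\<forall>\<nu>::nat. int \<nu> \<ge> \<eta> \<longrightarrow> H0m_vanishes n f \<nu>"
  shows "\<forall>\<nu>::nat. int \<nu> \<ge> \<eta> \<longrightarrow> ann_sym n f \<nu> = ker_h n f"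
proof (intro allI impI)
  fix \<nu> :: nat assume nu: "int \<nu> \<ge> \<eta>"
  have fc: "\<forall>i<n. f i \<in> compA n d" using assms(3) by blast
  have fA: "\<forall>i<n. f i \<in> ringA n" using fc unfolding compA_def by auto
  show "ann_sym n f \<nu> = ker_h n f"
  proof
    show "ann_sym n f \<nu> \<subseteq> ker_h n f" using ann_sub_ker[OF assms(1) fA] by blast
    show "ker_h n f \<subseteq> ann_sym n f \<nu>"
      using ker_sub_ann[OF assms(1,2) fc assms(4)] assms(5) nu by blast
  qed
qed

end
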